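(* Let $r\ge 2$ be real, let $q$ be an $r$-mighty prime, and let $p_m$ be a prime with $p_m>q^2$. Let $n\in\mathbb{S}$ satisfy $$\sigma_{-r}(q)<\sigma_{-r}(n)<\sigma_{-r}(qp_m).$$ Then $q\mid n$ (i.e. $v_q(n)\ge1$), and $q$ is the smallest prime $p$ with $v_p(n)>0$.
   Context: $p_m$ denotes the $m$-th prime. A Steinitz number is a formal product $n=\prod_p p^{\alpha_p}$ over all primes with $\alpha_p\in\mathbb{Z}_{\ge0}\cup\{\infty\}$; $v_p(n)=\alpha_p$; $\mathbb{S}$ is the set of Steinitz numbers. For real $r>1$, $\sigma_{-r}$ is defined on $\mathbb{S}$ multiplicatively with $\sigma_{-r}(p^\alpha)=\sum_{i=0}^\alpha p^{-ri}$ for finite $\alpha$ and $\sigma_{-r}(p^\infty)=\frac1{1-p^{-r}}$ (on $\mathbb{N}$ this is $\sum_{d\mid n}d^{-r}$). Let $u_m(r)=\prod_{t=m+1}^\infty\frac1{1-p_t^{-r}}$. A prime $p_m$ is $r$-mighty if $1+p_m^{-r}>u_m(r)$. *)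

theory Defs
  imports Complex_Main "HOL-Computational_Algebra.Primes" "HOL-Library.Extended_Nat"
begin

text \<open>A Steinitz number is represented by its exponent function: for each prime p,
  the value at p is v_p(n) in N extended by infinity. Values at non-primes are ignored.\<close>
type_synonym steinitz = "nat \<Rightarrow> enat"

definition steinitz_of_nat :: "nat \<Rightarrow> steinitz" where
  "steinitz_of_nat n = (\<lambda>p. enat (multiplicity p n))"

definition sigma_loc :: "real \<Rightarrow> nat \<Rightarrow> enat \<Rightarrow> real" where
  "sigma_loc r p a = (case a of
      enat k \<Rightarrow> (\<Sum>i\<le>k. real p powr (- r * real i))
    | \<infinity> \<Rightarrow> 1 / (1 - real p powr (- r)))"

definition sigma_neg :: "real \<Rightarrow> steinitz \<Rightarrow> real" where
  "sigma_neg r n = lim (\<lambda>N. \<Prod>p\<in>{p. prime p \<and> p \<le> N}. sigma_loc r p (n p))"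

definition u_tail :: "real \<Rightarrow> nat \<Rightarrow> real" where
  "u_tail r q = lim (\<lambda>N. \<Prod>p\<in>{p. prime p \<and> q < p \<and> p \<le> N}. 1 / (1 - real p powr (- r)))"

definition mighty :: "real \<Rightarrow> nat \<Rightarrow> bool" where
  "mighty r q \<longleftrightarrow> prime q \<and> 1 + real q powr (- r) > u_tail r q"

end

theory Submission imports Defs "HOL-Analysis.Summation_Tests" begin

lemma fin_primes: "finite {p::nat. prime p \<and> p \<le> N}"
  by (rule finite_subset[of _ "{..N}"]) auto

lemma xbound:
  assumes "r \<ge> 2" "prime (p::nat)"
  shows "0 < real p powr (-r)" "real p powr (-r) \<le> 1/2"
proof -
  have p2: "real p \<ge> 2" using assms(2) prime_ge_2_nat by auto
  show "0 < real p powr (-r)" using p2 by simp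
  have "real p powr (-r) \<le> 2 powr (-r)" using p2 assms(1) by (intro powr_mono2') auto
  also have "\<dots> \<le> 2 powr (-1)" using assms(1) by (intro powr_mono) auto
  also have "\<dots> = 1/2" by (simp add: powr_minus)
  finally show "real p powr (-r) \<le> 1/2" .
qed

lemma sigma_loc_enat:
  assumes "prime (p::nat)"
  shows "sigma_loc r p (enat k) = (\<Sum>i\<le>k. (real p powr (-r)) ^ i)"
proof -
  have "real p > 0" using assms prime_gt_0_nat by simp
  have "real p powr (- r * real i) = (real p powr (-r)) ^ i" for i
  proof -
    have "(real p powr (-r)) ^ i = (real p powr (-r)) powr real i"
      using \<open>real p > 0\<close> by (simp add: powr_realpow)
    also have "\<dots> = real p powr (- r * real i)" by (simp add: powr_powr)
    finally show ?thesis by simp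
  qed
  then show ?thesis by (simp add: sigma_loc_def)
qed

lemma sigma_loc_bounds:
  assumes "r \<ge> 2" "prime (p::nat)"
  shows "1 \<le> sigma_loc r p a" "sigma_loc r p a \<le> 1 / (1 - real p powr (-r))"
    "a > 0 \<Longrightarrow> 1 + real p powr (-r) \<le> sigma_loc r p a"
proof -
  define x where "x = real p powr (-r)"
  have x: "0 < x" "x \<le> 1/2" using xbound[OF assms] by (auto simp: x_def)
  have geo_le: "1 + x \<le> 1 / (1 - x)"
  proof -
    have "(1 + x) * (1 - x) \<le> 1" by (simp add: algebra_simps)
    then show ?thesis using x by (simp add: field_simps)
  qed
  have ge1: "1 \<le> 1 / (1 - x)" using x by (simp add: field_simps)
  have "1 \<le> sigma_loc r p a \<and> sigma_loc r p a \<le> 1 / (1 - x) \<and> (a > 0 \<longrightarrow> 1 + x \<le> sigma_loc r p a)"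
  proof (cases a)
    case (enat k)
    have s: "sigma_loc r p a = (\<Sum>i\<le>k. x ^ i)" using enat sigma_loc_enat[OF assms(2)] x_def by simp
    have "(\<Sum>i\<le>k. x ^ i) \<ge> (\<Sum>i\<in>{0}. x ^ i)"
      by (rule sum_mono2) (use x in auto)
    moreover have "(\<Sum>i\<le>k. x ^ i) \<le> 1 / (1 - x)"
      using geometric_sum_less[of x "{..k}"] x by simp
    moreover have "a > 0 \<Longrightarrow> (\<Sum>i\<le>k. x ^ i) \<ge> (\<Sum>i\<in>{0,1}. x ^ i)"
      by (rule sum_mono2) (use x enat in \<open>auto simp: zero_enat_def\<close>)
    ultimately show ?thesis using s by auto
  next
    case infinity
    then show ?thesis using geo_le ge1 by (simp add: sigma_loc_def x_def)
  qed
  then show "1 \<le> sigma_loc r p a" "sigma_loc r p a \<le> 1 / (1 - real p powr (-r))"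
    "a > 0 \<Longrightarrow> 1 + real p powr (-r) \<le> sigma_loc r p a" by (auto simp: x_def)
qed

lemma sigma_loc_0: "prime (p::nat) \<Longrightarrow> sigma_loc r p 0 = 1"
  by (simp add: sigma_loc_def zero_enat_def prime_gt_0_nat)

lemma sigma_loc_1: "prime (p::nat) \<Longrightarrow> sigma_loc r p 1 = 1 + real p powr (-r)"
  by (simp add: sigma_loc_def one_enat_def prime_gt_0_nat)

lemma prod_conv:
  fixes f :: "nat \<Rightarrow> real"
  assumes r: "r \<ge> 2" and f: "\<And>p. prime p \<Longrightarrow> 1 \<le> f p \<and> f p \<le> 1 / (1 - real p powr (-r))"
  defines "F \<equiv> (\<lambda>N. \<Prod>p\<in>{p. prime p \<and> p \<le> N}. f p)"
  shows "F \<longlonglongrightarrow> lim F" "\<And>N. F N \<le> lim F"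
proof -
  have inc: "incseq F"
  proof (rule monoI)
    fix M N :: nat assume "M \<le> N"
    then have sub: "{p. prime p \<and> p \<le> M} \<subseteq> {p. prime p \<and> p \<le> N}" by auto
    have "F N = F M * (\<Prod>p\<in>{p. prime p \<and> p \<le> N} - {p. prime p \<and> p \<le> M}. f p)"
      unfolding F_def using prod.subset_diff[OF sub fin_primes] by (simp add: mult.commute)
    moreover have "(\<Prod>p\<in>{p. prime p \<and> p \<le> N} - {p. prime p \<and> p \<le> M}. f p) \<ge> 1"
      using f by (intro prod_ge_1) auto
    moreover have "F M \<ge> 0" unfolding F_def using f by (intro prod_nonneg) (auto intro: order_trans[OF zero_le_one])
    ultimately show "F M \<le> F N" by (metis mult_left_mono mult.right_neutral)
  qed
  define S where "S = (\<Sum>n. real n powr (-r))"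
  have summ: "summable (\<lambda>n. real n powr (-r))" using r by (subst summable_real_powr_iff) auto
  have bdd: "F N \<le> exp (2 * S)" for N
  proof -
    have "F N \<le> (\<Prod>p\<in>{p. prime p \<and> p \<le> N}. exp (2 * real p powr (-r)))"
      unfolding F_def
    proof (rule prod_mono, safe)
      fix p :: nat assume p: "prime p"
      define x where "x = real p powr (-r)"
      have x: "0 < x" "x \<le> 1/2" using xbound[OF r p] by (auto simp: x_def)
      have "1 / (1 - x) \<le> 1 + 2 * x"
      proof -
        have "1 \<le> (1 + 2 * x) * (1 - x)" using x by (simp add: algebra_simps power2_eq_square)
        then show ?thesis using x by (simp add: field_simps)
      qed
      also have "\<dots> \<le> exp (2 * x)" by (rule exp_ge_add_one_self)
      finally show "0 \<le> f p" "f p \<le> exp (2 * real p powr - r)" using f[OF p] x_def by auto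
    qed
    also have "\<dots> = exp (\<Sum>p\<in>{p. prime p \<and> p \<le> N}. 2 * real p powr (-r))"
      by (simp add: exp_sum fin_primes)
    also have "\<dots> \<le> exp (2 * S)"
    proof -
      have "(\<Sum>p\<in>{p. prime p \<and> p \<le> N}. real p powr (-r)) \<le> S"
        unfolding S_def by (rule sum_le_suminf[OF summ fin_primes]) auto
      then show ?thesis by (simp add: sum_distrib_left[symmetric])
    qed
    finally show ?thesis .
  qed
  have "F \<longlonglongrightarrow> Sup (range F)"
    by (rule LIMSEQ_incseq_SUP[OF _ inc]) (use bdd in \<open>auto intro!: bdd_aboveI[where M="exp (2 * S)"]\<close>)
  then have "convergent F" by (auto simp: convergent_def)
  then show "F \<longlonglongrightarrow> lim F" by (simp add: convergent_LIMSEQ_iff)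
  then show "\<And>N. F N \<le> lim F" using incseq_le[OF inc] by blast
qed


lemma key_ineq:
  assumes r: "r \<ge> 2" and p: "prime (p::nat)" and q: "prime (q::nat)" and pq: "p < q"
    and pm: "prime pm" and pmq: "pm > q^2"
  shows "(1 + real q powr (-r)) * (1 + real pm powr (-r)) < 1 + real p powr (-r)"
proof -
  define Q where "Q = real q"
  define x where "x = real p powr (-r)"
  define y where "y = Q powr (-r)"
  define z where "z = real pm powr (-r)"
  have p2: "p \<ge> 2" using p prime_ge_2_nat by auto
  have Q3: "Q \<ge> 3" using p2 pq unfolding Q_def by linarith
  have pQ: "real p \<le> Q - 1" using pq unfolding Q_def by linarith
  have y0: "y > 0" and z0: "z > 0" using Q3 pm prime_gt_0_nat unfolding y_def z_def by auto
  have h1: "x \<ge> (Q - 1) powr (-r)" unfolding x_def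
    by (rule powr_mono2') (use r p2 pQ in auto)
  have h2: "(Q - 1) powr (-r) = y * (Q / (Q - 1)) powr r"
    using Q3 by (simp add: y_def powr_divide powr_minus field_simps)
  have h3: "(Q / (Q - 1)) powr r \<ge> Q / (Q - 1)"
  proof -
    have "(Q / (Q - 1)) powr 1 \<le> (Q / (Q - 1)) powr r" using r Q3 by (intro powr_mono) auto
    then show ?thesis using Q3 by simp
  qed
  have hx: "x \<ge> y * (Q / (Q - 1))" using h1 h2 h3 y0 by (metis mult_left_mono less_imp_le order_trans)
  have h4: "y \<le> 1 / Q^2"
  proof -
    have "y \<le> Q powr (-2)" unfolding y_def using r Q3 by (intro powr_mono) auto
    also have "Q powr (-2) = 1 / Q^2" using Q3 by (simp add: powr_minus powr_numeral divide_inverse)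
    finally show ?thesis .
  qed
  have h5: "z < y * y"
  proof -
    have "z < (Q * Q) powr (-r)" unfolding z_def
      by (rule powr_less_mono2_neg) (use r Q3 pmq in \<open>auto simp: Q_def power2_eq_square simp flip: of_nat_mult\<close>)
    also have "\<dots> = y * y" unfolding y_def using Q3 by (simp add: powr_mult)
    finally show ?thesis .
  qed
  have y1: "y \<le> 1" using h4 Q3 by (smt (verit) divide_le_eq_1 one_le_power)
  have a1: "z * (1 + y) < y * y * (1 + y)" using h5 y0 by (intro mult_strict_right_mono) auto
  have a2: "y * y * y \<le> y * y" using y1 y0 by (simp add: mult_left_le)
  have a3: "y * y \<le> y / Q^2" using mult_left_mono[OF h4, of y] y0 by simp
  have a4: "2 / Q^2 \<le> 1 / (Q - 1)"
  proof -
    have "0 \<le> (Q - 1)^2" by simp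
    then have "2 * (Q - 1) \<le> Q^2" by (simp add: power2_eq_square algebra_simps)
    then show ?thesis using Q3 by (simp add: field_simps)
  qed
  have a6: "2 * (y / Q^2) \<le> y / (Q - 1)" using mult_left_mono[OF a4, of y] y0 by (simp add: mult.commute)
  have a5: "y * (Q / (Q - 1)) = y + y / (Q - 1)" using Q3 by (simp add: field_simps)
  have a1': "z + z * y < y * y + y * y * y" using a1 by (simp add: algebra_simps)
  have "y + z * (1 + y) < y * (Q / (Q - 1))"
    unfolding a5 distrib_left mult_1_right using a1' a2 a3 a6 by linarith
  then have "(1 + y) * (1 + z) < 1 + x" using hx by (simp add: algebra_simps)
  then show ?thesis unfolding x_def y_def z_def Q_def .
qed


lemma lim_evconst:
  assumes "\<And>N. N \<ge> N0 \<Longrightarrow> F N = (c::real)"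
  shows "lim F = c"
  by (rule limI, rule tendsto_eventually) (use assms in \<open>auto intro: eventually_sequentiallyI\<close>)

lemma sigma_loc_S0: "prime (p::nat) \<Longrightarrow> sigma_loc r p (enat (Suc 0)) = 1 + real p powr (-r)"
  using sigma_loc_1[of p r] by (simp add: one_enat_def)

lemma prod_ge_factor:
  assumes "prime (p::nat)" "p \<le> N" "\<And>p. prime p \<Longrightarrow> 1 \<le> (f p::real)"
  shows "f p \<le> (\<Prod>p\<in>{p. prime p \<and> p \<le> N}. f p)"
proof -
  have "(\<Prod>p\<in>{p. prime p \<and> p \<le> N}. f p) = f p * (\<Prod>p\<in>{p. prime p \<and> p \<le> N} - {p}. f p)"
    using assms by (intro prod.remove) (auto simp: fin_primes)
  moreover have "(\<Prod>p\<in>{p. prime p \<and> p \<le> N} - {p}. f p) \<ge> 1" using assms by (intro prod_ge_1) auto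
  moreover have "f p \<ge> 1" using assms by auto
  ultimately show ?thesis by (metis mult_left_mono mult.right_neutral less_le_trans zero_less_one less_imp_le)
qed

lemma sigma_q:
  assumes "prime (q::nat)"
  shows "sigma_neg r (steinitz_of_nat q) = 1 + real q powr (-r)"
  unfolding sigma_neg_def
proof (rule lim_evconst[of q])
  fix N assume N: "q \<le> N"
  have "(\<Prod>p\<in>{p. prime p \<and> p \<le> N}. sigma_loc r p (steinitz_of_nat q p))
      = (\<Prod>p\<in>{p. prime p \<and> p \<le> N}. if p = q then 1 + real q powr (-r) else 1)"
  proof (rule prod.cong[OF refl])
    fix p assume "p \<in> {p. prime p \<and> p \<le> N}"
    then have p: "prime p" by auto
    show "sigma_loc r p (steinitz_of_nat q p) = (if p = q then 1 + real q powr (-r) else 1)"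
      using p assms by (auto simp: steinitz_of_nat_def prime_multiplicity_other multiplicity_self
          sigma_loc_S0 sigma_loc_0[simplified zero_enat_def])
  qed
  also have "\<dots> = 1 + real q powr (-r)" using N assms by (simp add: prod.delta fin_primes)
  finally show "(\<Prod>p\<in>{p. prime p \<and> p \<le> N}. sigma_loc r p (steinitz_of_nat q p)) = 1 + real q powr (-r)" .
qed

lemma sigma_qpm:
  assumes "prime (q::nat)" "prime pm" "q \<noteq> pm"
  shows "sigma_neg r (steinitz_of_nat (q * pm)) = (1 + real q powr (-r)) * (1 + real pm powr (-r))"
  unfolding sigma_neg_def
proof (rule lim_evconst[of "q + pm"])
  fix N assume N: "q + pm \<le> N"
  have "(\<Prod>p\<in>{p. prime p \<and> p \<le> N}. sigma_loc r p (steinitz_of_nat (q * pm) p))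
      = (\<Prod>p\<in>{p. prime p \<and> p \<le> N}. (if p = q then 1 + real q powr (-r) else 1) *
            (if p = pm then 1 + real pm powr (-r) else 1))"
  proof (rule prod.cong[OF refl])
    fix p assume "p \<in> {p. prime p \<and> p \<le> N}"
    then have p: "prime p" by auto
    have m: "multiplicity p (q * pm) = multiplicity p q + multiplicity p pm"
      using p assms by (intro prime_elem_multiplicity_mult_distrib) (auto simp: prime_gt_0_nat)
    show "sigma_loc r p (steinitz_of_nat (q * pm) p) = (if p = q then 1 + real q powr (-r) else 1) *
            (if p = pm then 1 + real pm powr (-r) else 1)"
      using p assms unfolding steinitz_of_nat_def m
      by (auto simp: prime_multiplicity_other multiplicity_self
          sigma_loc_S0 sigma_loc_0[simplified zero_enat_def])
  qed
  also have "\<dots> = (1 + real q powr (-r)) * (1 + real pm powr (-r))"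
    using N assms by (simp add: prod.distrib prod.delta fin_primes)
  finally show "(\<Prod>p\<in>{p. prime p \<and> p \<le> N}. sigma_loc r p (steinitz_of_nat (q * pm) p)) =
     (1 + real q powr (-r)) * (1 + real pm powr (-r))" .
qed

theorem mainTheorem5:
  fixes r :: real and q pm :: nat and n :: steinitz
  assumes "r \<ge> 2"
    and "mighty r q"
    and "prime pm" and "pm > q ^ 2"
    and "sigma_neg r (steinitz_of_nat q) < sigma_neg r n"
    and "sigma_neg r n < sigma_neg r (steinitz_of_nat (q * pm))"
  shows "n q \<ge> 1 \<and> (\<forall>p. prime p \<and> n p > 0 \<longrightarrow> q \<le> p)"
proof -
  note r = assms(1)
  have q: "prime q" and mq: "1 + real q powr (-r) > u_tail r q" using assms(2) by (auto simp: mighty_def)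
  have q2: "q \<ge> 2" using q prime_ge_2_nat by auto
  have qpm: "q \<noteq> pm"
  proof
    assume "q = pm"
    then have "q * q < q * 1" using assms(4) by (simp add: power2_eq_square)
    then show False using q2 by (metis mult_less_cancel1 not_less_zero less_one less_le_trans not_le one_le_numeral)
  qed
  define F where "F = (\<lambda>N. \<Prod>p\<in>{p. prime p \<and> p \<le> N}. sigma_loc r p (n p))"
  have fb: "\<And>p. prime p \<Longrightarrow> 1 \<le> sigma_loc r p (n p) \<and> sigma_loc r p (n p) \<le> 1 / (1 - real p powr (-r))"
    using sigma_loc_bounds[OF r] by auto
  have SF: "sigma_neg r n = lim F" unfolding sigma_neg_def F_def ..
  have Fc: "F \<longlonglongrightarrow> lim F" and Fle: "\<And>N. F N \<le> lim F"
    using prod_conv[OF r fb] unfolding F_def by auto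
  have Sq: "sigma_neg r (steinitz_of_nat q) = 1 + real q powr (-r)" by (rule sigma_q[OF q])
  have Sqpm: "sigma_neg r (steinitz_of_nat (q * pm)) = (1 + real q powr (-r)) * (1 + real pm powr (-r))"
    by (rule sigma_qpm[OF q assms(3) qpm])
  have part2: "\<forall>p. prime p \<and> n p > 0 \<longrightarrow> q \<le> p"
  proof (intro allI impI, rule ccontr)
    fix p assume a: "prime p \<and> n p > 0" and "\<not> q \<le> p"
    then have pq: "p < q" by auto
    have "1 + real p powr (-r) \<le> sigma_loc r p (n p)" using sigma_loc_bounds(3)[OF r] a by auto
    also have "\<dots> \<le> F p" unfolding F_def using a fb by (intro prod_ge_factor) auto
    also have "\<dots> \<le> sigma_neg r n" using Fle SF by simp
    also have "\<dots> < (1 + real q powr (-r)) * (1 + real pm powr (-r))" using assms(6) Sqpm by simp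
    also have "\<dots> < 1 + real p powr (-r)" using key_ineq[OF r _ q pq assms(3,4)] a by auto
    finally have "1 + real p powr (-r) < 1 + real p powr (-r)" .
    then show False by simp
  qed
  have part1: "n q \<ge> 1"
  proof (rule ccontr)
    assume "\<not> n q \<ge> 1"
    then have nq0: "n q = 0" by (cases "n q") (auto simp: one_enat_def zero_enat_def)
    define g where "g = (\<lambda>p::nat. if q < p then 1 / (1 - real p powr (-r)) else 1)"
    define U where "U = (\<lambda>N. \<Prod>p\<in>{p. prime p \<and> p \<le> N}. g p)"
    have gb: "\<And>p. prime p \<Longrightarrow> 1 \<le> g p \<and> g p \<le> 1 / (1 - real p powr (-r))"
    proof -
      fix p :: nat assume p: "prime p"
      have "0 < real p powr (-r)" "real p powr (-r) \<le> 1/2" using xbound[OF r p] by auto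
      then have "1 \<le> 1 / (1 - real p powr (-r))" by (simp add: field_simps)
      then show "1 \<le> g p \<and> g p \<le> 1 / (1 - real p powr (-r))" by (simp add: g_def)
    qed
    have Uc: "U \<longlonglongrightarrow> lim U" using prod_conv[OF r gb] unfolding U_def by auto
    have "u_tail r q = lim U"
    proof -
      have "(\<lambda>N. \<Prod>p\<in>{p. prime p \<and> q < p \<and> p \<le> N}. 1 / (1 - real p powr (-r))) = U"
      proof
        fix N
        have "{p. prime p \<and> q < p \<and> p \<le> N} = {p \<in> {p. prime p \<and> p \<le> N}. q < p}" by auto
        then show "(\<Prod>p\<in>{p. prime p \<and> q < p \<and> p \<le> N}. 1 / (1 - real p powr (-r))) = U N"
          unfolding U_def g_def using prod.inter_filter[OF fin_primes, of "\<lambda>p. 1 / (1 - real p powr (-r))" N "\<lambda>p. q < p"]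
          by simp
      qed
      then show ?thesis unfolding u_tail_def by simp
    qed
    have FU: "F N \<le> U N" for N
      unfolding F_def U_def
    proof (rule prod_mono, safe)
      fix p :: nat assume p: "prime p"
      show "0 \<le> sigma_loc r p (n p)" using fb[OF p] by linarith
      show "sigma_loc r p (n p) \<le> g p"
      proof (cases "q < p")
        case True then show ?thesis using fb[OF p] by (simp add: g_def)
      next
        case False
        then have "n p = 0"
        proof (cases "p = q")
          case False
          with \<open>\<not> q < p\<close> have "p < q" by auto
          then show ?thesis using part2 p by (auto simp: zero_less_iff_neq_zero)
        qed (use nq0 in auto)
        then show ?thesis using False p by (simp add: g_def sigma_loc_0)
      qed
    qed
    have "lim F \<le> lim U" by (rule LIMSEQ_le[OF Fc Uc]) (use FU in auto)
    then have "sigma_neg r n \<le> u_tail r q" using SF \<open>u_tail r q = lim U\<close> by simp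
    then show False using mq assms(5) Sq by simp
  qed
  show ?thesis using part1 part2 by blast
qed

end
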